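(* Let $n\ge3$ be an even integer and let $x\in\mathcal{D}_n$ have order $m$. Then the degree of $x$ in $OD(\mathcal{D}_n)$ is $$\deg(x)=\begin{cases} m-2\phi(m)+\sum_{\lambda\mid\frac{n}{m}}\phi(\lambda m), & m \text{ odd},\ m>1,\\ \sum_{\lambda\mid\frac{n}{2}}\phi(2\lambda), & m=2,\\ n+m-2\phi(m)+\sum_{\lambda\mid\frac{n}{m}}\phi(\lambda m), & m\text{ even},\ m>2,\\ 2n-1, & m=1,\end{cases}$$ where $\phi$ is Euler's totient function.
   Context: The dihedral group $\mathcal{D}_n$ ($n\ge3$) is the group $\langle a,b\mid a^n=b^2=(ab)^2=e\rangle$ of order $2n$. For a finite group $G$, $o(x)$ denotes the order of $x\in G$. The order-divisor graph $OD(G)$ is the simple undirected graph with vertex set $G$, in which two distinct vertices $x,y$ are adjacent if and only if $o(x)\neq o(y)$ and either $o(x)\mid o(y)$ or $o(y)\mid o(x)$. *)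

theory Defs
  imports "HOL-Algebra.Algebra" "HOL-Number_Theory.Number_Theory"
begin

text \<open>Concrete model of the dihedral group D_n of order 2n: the pair (i, s) stands for
  a^i b^(if s then 1 else 0) with 0 \<le> i < n.  Using b a = a^(-1) b one gets
  (a^i b^s)(a^j b^t) = a^(i + (if s then -j else j)) b^(s+t).\<close>

definition dih_mult :: "nat \<Rightarrow> int \<times> bool \<Rightarrow> int \<times> bool \<Rightarrow> int \<times> bool" where
  "dih_mult n x y = ((fst x + (if snd x then - fst y else fst y)) mod int n, snd x \<noteq> snd y)"

definition dihedral :: "nat \<Rightarrow> (int \<times> bool) monoid" where
  "dihedral n = \<lparr> carrier = {0..<int n} \<times> (UNIV :: bool set),
     monoid.mult = dih_mult n, one = (0, False) \<rparr>"

definition od_adj :: "('a, 'b) monoid_scheme \<Rightarrow> 'a \<Rightarrow> 'a \<Rightarrow> bool" where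
  "od_adj G x y \<longleftrightarrow> x \<noteq> y \<and> group.ord G x \<noteq> group.ord G y \<and>
     (group.ord G x dvd group.ord G y \<or> group.ord G y dvd group.ord G x)"

definition od_degree :: "('a, 'b) monoid_scheme \<Rightarrow> 'a \<Rightarrow> nat" where
  "od_degree G x = card {y \<in> carrier G. od_adj G x y}"

end

theory Submission imports Defs begin

lemma dih_group:
  assumes "n > 0" shows "group (dihedral n)"
proof (rule groupI)
  fix x y assume "x \<in> carrier (dihedral n)" "y \<in> carrier (dihedral n)"
  then show "x \<otimes>\<^bsub>dihedral n\<^esub> y \<in> carrier (dihedral n)"
    using assms by (auto simp: dihedral_def dih_mult_def)
next
  show "\<one>\<^bsub>dihedral n\<^esub> \<in> carrier (dihedral n)" using assms by (auto simp: dihedral_def)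
next
  fix x y z assume "x \<in> carrier (dihedral n)" "y \<in> carrier (dihedral n)" "z \<in> carrier (dihedral n)"
  then show "x \<otimes>\<^bsub>dihedral n\<^esub> y \<otimes>\<^bsub>dihedral n\<^esub> z = x \<otimes>\<^bsub>dihedral n\<^esub> (y \<otimes>\<^bsub>dihedral n\<^esub> z)"
    by (cases x; cases y; cases z) (auto simp: dihedral_def dih_mult_def mod_simps algebra_simps)
next
  fix x assume "x \<in> carrier (dihedral n)"
  then show "\<one>\<^bsub>dihedral n\<^esub> \<otimes>\<^bsub>dihedral n\<^esub> x = x"
    by (cases x) (auto simp: dihedral_def dih_mult_def)
next
  fix x assume x: "x \<in> carrier (dihedral n)"
  obtain i s where xi: "x = (i, s)" by (cases x)
  show "\<exists>y\<in>carrier (dihedral n). y \<otimes>\<^bsub>dihedral n\<^esub> x = \<one>\<^bsub>dihedral n\<^esub>"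
  proof (cases s)
    case True
    then show ?thesis using x xi by (intro bexI[of _ x]) (auto simp: dihedral_def dih_mult_def)
  next
    case False
    then show ?thesis using x xi assms
      by (intro bexI[of _ "((- i) mod int n, False)"]) (auto simp: dihedral_def dih_mult_def mod_simps)
  qed
qed

lemma rot_pow:
  "(i, False) [^]\<^bsub>dihedral n\<^esub> (k::nat) = ((int k * i) mod int n, False)"
  by (induction k) (auto simp: dihedral_def dih_mult_def mod_simps algebra_simps)

lemma dvd_iff_div_gcd:
  fixes a k n :: nat assumes "n > 0"
  shows "n dvd k * a \<longleftrightarrow> n div gcd a n dvd k"
proof -
  obtain g where gdef: "gcd a n = g" by simp
  have g0: "g > 0" using assms by (simp flip: gdef)
  obtain a' where a1: "a = g * a'" using gcd_dvd1[of a n] gdef by (metis dvdE)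
  obtain n' where n1: "n = g * n'" using gcd_dvd2[of a n] gdef by (metis dvdE)
  have "gcd a n = g * gcd a' n'" unfolding a1 n1 by (simp add: gcd_mult_distrib_nat)
  then have "g * gcd a' n' = g * 1" using gdef by linarith
  then have "gcd a' n' = 1" using mult_left_cancel[of g "gcd a' n'" 1] g0 by linarith
  then have cop: "coprime a' n'" using coprime_iff_gcd_eq_1 by blast
  have "n dvd k * a \<longleftrightarrow> g * n' dvd g * (k * a')" unfolding a1 n1 by (simp add: ac_simps)
  also have "\<dots> \<longleftrightarrow> n' dvd k * a'" using g0 by simp
  also have "\<dots> \<longleftrightarrow> n' dvd k" using cop by (simp add: coprime_commute coprime_dvd_mult_left_iff)
  finally have *: "n dvd k * a \<longleftrightarrow> n' dvd k" .
  have "n div g = n'" unfolding n1 using g0 by simp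
  then show ?thesis using * gdef by simp
qed

lemma ord_dih:
  assumes n: "n > 0" and y: "y \<in> carrier (dihedral n)"
  shows "group.ord (dihedral n) y = (if snd y then 2 else n div gcd (nat (fst y)) n)"
proof -
  interpret G: group "dihedral n" using dih_group[OF n] .
  obtain i s where yi: "y = (i, s)" by (cases y)
  have i: "0 \<le> i" "i < int n" using y yi by (auto simp: dihedral_def)
  show ?thesis
  proof (cases s)
    case False
    have "\<forall>k. y [^]\<^bsub>dihedral n\<^esub> k = \<one>\<^bsub>dihedral n\<^esub> \<longleftrightarrow> n div gcd (nat i) n dvd k"
    proof
      fix k :: nat
      have "y [^]\<^bsub>dihedral n\<^esub> k = \<one>\<^bsub>dihedral n\<^esub> \<longleftrightarrow> int n dvd int k * i"
        using False yi by (simp add: rot_pow) (simp add: dihedral_def mod_eq_0_iff_dvd)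
      also have "\<dots> \<longleftrightarrow> int n dvd int (k * nat i)" using i by simp
      also have "\<dots> \<longleftrightarrow> n dvd k * nat i" by (simp only: int_dvd_int_iff)
      also have "\<dots> \<longleftrightarrow> n div gcd (nat i) n dvd k" using dvd_iff_div_gcd[OF n] by blast
      finally show "y [^]\<^bsub>dihedral n\<^esub> k = \<one>\<^bsub>dihedral n\<^esub> \<longleftrightarrow> n div gcd (nat i) n dvd k" .
    qed
    then show ?thesis using G.ord_unique[OF y] False yi by simp
  next
    case True
    have "y [^]\<^bsub>dihedral n\<^esub> (2::nat) = y \<otimes>\<^bsub>dihedral n\<^esub> y"
      using y by (simp add: numeral_2_eq_2)
    also have "\<dots> = \<one>\<^bsub>dihedral n\<^esub>" using True yi by (simp add: dihedral_def dih_mult_def)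
    finally have "G.ord y dvd 2" using G.pow_eq_id[OF y] by simp
    moreover have "G.ord y \<noteq> 1" using G.ord_eq_1[OF y] True yi by (simp add: dihedral_def)
    ultimately have "G.ord y = 2"
    proof -
      assume a: "G.ord y dvd 2" "G.ord y \<noteq> 1"
      have "G.ord y \<le> 2" using dvd_imp_le[OF a(1)] by simp
      moreover have "G.ord y \<noteq> 0" using a(1) by (metis dvd_0_left_iff zero_neq_numeral)
      ultimately show ?thesis using a(2) by linarith
    qed
    then show ?thesis using True yi by simp
  qed
qed


lemma div_gcd_dvd: assumes n: "n > 0" shows "n div gcd k n dvd (n::nat)"
proof -
  have g: "gcd k n dvd n" "gcd k n > 0" using n by auto
  from g(1) obtain c where c: "n = gcd k n * c" by (rule dvdE)
  have "n div gcd k n = c" using g(2) by (subst c) simp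
  then show ?thesis using c by (metis dvd_triv_right)
qed

lemma card_rot_ord:
  assumes n: "n > 0" and d: "d dvd n"
  shows "card {k\<in>{0..<n}. n div gcd k n = d} = totient d"
proof -
  obtain e where ne: "n = d * e" using d by (auto elim: dvdE)
  have d0: "d > 0" "e > 0" using n ne by auto
  have "{k\<in>{0..<n}. n div gcd k n = d} = {k\<in>{0..<n}. gcd k n = e}"
  proof (intro Collect_cong conj_cong refl)
    fix k
    have g: "gcd k n dvd n" "gcd k n > 0" using n by auto
    from g(1) obtain f where f: "n = gcd k n * f" by (erule dvdE)
    show "n div gcd k n = d \<longleftrightarrow> gcd k n = e"
    proof
      assume "n div gcd k n = d"
      moreover have "n div gcd k n = f" using g(2) by (subst f) simp
      ultimately have "f = d" by simp
      have "gcd k n * f = d * e" using f ne by simp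
      then have "d * gcd k n = d * e" using \<open>f = d\<close> by (simp add: mult.commute)
      then show "gcd k n = e" using d0 by simp
    next
      assume "gcd k n = e" then show "n div gcd k n = d" using ne d0 by simp
    qed
  qed
  also have "card \<dots> = card {k\<in>{0<..n}. gcd k n = e}"
    by (rule bij_betw_same_card[where f = "\<lambda>k. if k = 0 then n else k"])
       (use n in \<open>auto simp: bij_betw_def inj_on_def image_iff\<close>)
  also have "\<dots> = totient (n div e)" using card_gcd_eq_totient[OF n, of e] ne by simp
  also have "n div e = d" using ne d0 by simp
  finally show ?thesis .
qed

lemma count_rot:
  assumes n: "n > 0"
  shows "card {k\<in>{0..<n}. P (n div gcd k n)} = (\<Sum>d\<in>{d. d dvd n \<and> P d}. totient d)"
proof -
  let ?I = "{d. d dvd n \<and> P d}"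
  let ?A = "\<lambda>d. {k\<in>{0..<n}. n div gcd k n = d}"
  have fin: "finite ?I" using n by (auto intro: finite_subset[of _ "{..n}"] dest: dvd_imp_le)
  have eq: "{k\<in>{0..<n}. P (n div gcd k n)} = (\<Union>d\<in>?I. ?A d)"
  proof -
    have "n div gcd k n dvd n" for k using div_gcd_dvd[OF n] .
    then show ?thesis by auto
  qed
  have "card (\<Union>d\<in>?I. ?A d) = (\<Sum>d\<in>?I. card (?A d))"
    by (rule card_UN_disjoint) (use fin in auto)
  also have "\<dots> = (\<Sum>d\<in>?I. totient d)"
  proof (rule sum.cong[OF refl])
    fix d assume "d \<in> ?I"
    then show "card (?A d) = totient d" using card_rot_ord[OF n, of d] by simp
  qed
  finally show ?thesis using eq by simp
qed

lemma sum_adj: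
  fixes m n :: nat
  assumes n: "n > 0" and m: "m > 0" "m dvd n"
  shows "(\<Sum>d\<in>{d. d dvd n \<and> (d \<noteq> m \<and> (m dvd d \<or> d dvd m))}. totient d) + 2 * totient m
         = m + (\<Sum>l\<in>{d. d dvd n div m}. totient (l * m))"
proof -
  let ?D1 = "{d. d dvd m} - {m}" and ?D2 = "{d. d dvd n \<and> m dvd d} - {m}"
  have fm: "finite {d. d dvd m}" using m by (auto intro: finite_subset[of _ "{..m}"] dest: dvd_imp_le)
  have fn: "finite {d. d dvd n \<and> m dvd d}" using n by (auto intro: finite_subset[of _ "{..n}"] dest: dvd_imp_le)
  have split: "{d. d dvd n \<and> (d \<noteq> m \<and> (m dvd d \<or> d dvd m))} = ?D1 \<union> ?D2"
    using m by (auto intro: dvd_trans)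
  have disj: "?D1 \<inter> ?D2 = {}" by (auto dest: dvd_antisym)
  have s1: "(\<Sum>d\<in>?D1. totient d) + totient m = m"
    using sum.remove[OF fm, of m totient] totient_divisor_sum[of m] by simp
  have s2: "(\<Sum>d\<in>?D2. totient d) + totient m = (\<Sum>d\<in>{d. d dvd n \<and> m dvd d}. totient d)"
    using sum.remove[OF fn, of m totient] m by simp
  have img: "{d. d dvd n \<and> m dvd d} = (\<lambda>l. l * m) ` {l. l dvd n div m}"
  proof (intro equalityI subsetI)
    fix d assume "d \<in> {d. d dvd n \<and> m dvd d}"
    then have dn: "d dvd n" and md: "m dvd d" by auto
    from md obtain l where l1: "d = m * l" by (rule dvdE)
    from dn obtain c where l2: "n = d * c" by (rule dvdE)
    have "n div m = l * c" using m l1 l2 by (simp add: mult.assoc)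
    then have "l dvd n div m" by simp
    then show "d \<in> (\<lambda>l. l * m) ` {l. l dvd n div m}" using l1 by (intro image_eqI[of _ _ l]) (auto simp: mult.commute)
  next
    fix d assume "d \<in> (\<lambda>l. l * m) ` {l. l dvd n div m}"
    then obtain l where l: "d = l * m" "l dvd n div m" by auto
    have "l * m dvd (n div m) * m" using l(2) by (rule mult_dvd_mono) simp
    then have "d dvd n" using l(1) m(2) by simp
    then show "d \<in> {d. d dvd n \<and> m dvd d}" using l(1) by simp
  qed
  have inj: "inj_on (\<lambda>l. l * m) {l. l dvd n div m}" using m by (auto simp: inj_on_def)
  have s3: "(\<Sum>d\<in>{d. d dvd n \<and> m dvd d}. totient d) = (\<Sum>l\<in>{d. d dvd n div m}. totient (l * m))"
    unfolding img by (subst sum.reindex[OF inj]) simp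
  have "(\<Sum>d\<in>?D1 \<union> ?D2. totient d) = (\<Sum>d\<in>?D1. totient d) + (\<Sum>d\<in>?D2. totient d)"
    by (rule sum.union_disjoint) (use fm fn disj in auto)
  then show ?thesis unfolding split using s1 s2 s3 by linarith
qed


theorem mainTheorem18:
  fixes n :: nat and x :: "int \<times> bool"
  assumes "n \<ge> 3" and "even n" and "x \<in> carrier (dihedral n)"
  defines "m \<equiv> group.ord (dihedral n) x"
  shows "(odd m \<and> m > 1 \<longrightarrow> int (od_degree (dihedral n) x) =
            int m - 2 * int (totient m) + (\<Sum>l\<in>{d. d dvd n div m}. int (totient (l * m))))
       \<and> (m = 2 \<longrightarrow> int (od_degree (dihedral n) x) =
            (\<Sum>l\<in>{d. d dvd n div 2}. int (totient (2 * l))))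
       \<and> (even m \<and> m > 2 \<longrightarrow> int (od_degree (dihedral n) x) =
            int n + int m - 2 * int (totient m) + (\<Sum>l\<in>{d. d dvd n div m}. int (totient (l * m))))
       \<and> (m = 1 \<longrightarrow> int (od_degree (dihedral n) x) = 2 * int n - 1)"
proof -
  have n: "n > 0" using assms(1) by simp
  interpret G: group "dihedral n" using dih_group[OF n] .
  define h where "h = (\<lambda>y::int \<times> bool. if snd y then 2 else n div gcd (nat (fst y)) n)"
  have ordh: "G.ord y = h y" if "y \<in> carrier (dihedral n)" for y
    using ord_dih[OF n that] by (simp add: h_def)
  define P where "P = (\<lambda>k::nat. k \<noteq> m \<and> (m dvd k \<or> k dvd m))"
  have mh: "m = h x" using ordh[OF assms(3)] m_def by simp
  have gdvd: "n div gcd k n dvd n" for k using div_gcd_dvd[OF n] .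
  have gpos: "n div gcd k n > 0" for k using n
    by (simp add: dvd_imp_le div_greater_zero_iff)
  have mdvd: "m dvd n" using mh assms(2) gdvd by (auto simp: h_def)
  have m0: "m > 0" using mh gpos by (auto simp: h_def)
  let ?S = "{y \<in> carrier (dihedral n). od_adj (dihedral n) x y}"
  have S: "?S = {y \<in> carrier (dihedral n). P (h y)}"
    using ordh assms(3) mh by (auto simp: od_adj_def P_def)
  have S2: "{y \<in> carrier (dihedral n). P (h y)} =
      (\<lambda>k. (int k, False)) ` {k\<in>{0..<n}. P (n div gcd k n)} \<union> (if P 2 then {0..<int n} \<times> {True} else {})"
    (is "?L = ?A \<union> ?B")
  proof (intro equalityI subsetI)
    fix y assume y: "y \<in> ?L"
    obtain i s where yi: "y = (i, s)" by (cases y)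
    show "y \<in> ?A \<union> ?B"
    proof (cases s)
      case True then show ?thesis using y yi by (auto simp: h_def dihedral_def)
    next
      case False
      have "i \<ge> 0" "i < int n" using y yi by (auto simp: dihedral_def)
      then have "y = (int (nat i), False)" "nat i \<in> {k\<in>{0..<n}. P (n div gcd k n)}"
        using y yi False by (auto simp: h_def)
      then show ?thesis by blast
    qed
  next
    fix y assume "y \<in> ?A \<union> ?B"
    then show "y \<in> ?L" by (auto simp: h_def dihedral_def split: if_splits)
  qed
  have disj: "?A \<inter> ?B = {}" by auto
  have cA: "card ?A = (\<Sum>d\<in>{d. d dvd n \<and> P d}. totient d)"
  proof -
    have "card ?A = card {k\<in>{0..<n}. P (n div gcd k n)}" by (rule card_image) (auto simp: inj_on_def)
    then show ?thesis using count_rot[OF n, of P] by simp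
  qed
  have cB: "card ?B = (if P 2 then n else 0)" by (simp add: card_cartesian_product)
  have deg: "od_degree (dihedral n) x = (\<Sum>d\<in>{d. d dvd n \<and> P d}. totient d) + (if P 2 then n else 0)"
    unfolding od_degree_def S S2 using cA cB disj by (simp add: card_Un_disjoint)
  have sa: "(\<Sum>d\<in>{d. d dvd n \<and> P d}. totient d) + 2 * totient m
         = m + (\<Sum>l\<in>{d. d dvd n div m}. totient (l * m))"
    using sum_adj[OF n m0 mdvd] by (simp add: P_def)
  have degi: "int (od_degree (dihedral n) x) = int m - 2 * int (totient m)
      + (\<Sum>l\<in>{d. d dvd n div m}. int (totient (l * m))) + (if P 2 then int n else 0)"
  proof -
    have "int (od_degree (dihedral n) x) + 2 * int (totient m) =
       int m + int (\<Sum>l\<in>{d. d dvd n div m}. totient (l * m)) + (if P 2 then int n else 0)"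
      using arg_cong[OF sa, of int] unfolding deg by simp
    then show ?thesis by (simp add: algebra_simps)
  qed
  show ?thesis
  proof (intro conjI impI)
    assume a: "odd m \<and> m > 1"
    have "\<not> P 2" using a by (auto simp: P_def dest: dvd_imp_le)
    then show "int (od_degree (dihedral n) x) =
            int m - 2 * int (totient m) + (\<Sum>l\<in>{d. d dvd n div m}. int (totient (l * m)))"
      using degi by simp
  next
    assume a: "m = 2"
    have "\<not> P 2" using a by (auto simp: P_def)
    then show "int (od_degree (dihedral n) x) = (\<Sum>l\<in>{d. d dvd n div 2}. int (totient (2 * l)))"
      using degi a by (simp add: mult.commute)
  next
    assume a: "even m \<and> m > 2"
    have "P 2" using a by (auto simp: P_def)
    then show "int (od_degree (dihedral n) x) =
            int n + int m - 2 * int (totient m) + (\<Sum>l\<in>{d. d dvd n div m}. int (totient (l * m)))"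
      using degi by simp
  next
    assume a: "m = 1"
    have "P 2" using a by (auto simp: P_def)
    moreover have "(\<Sum>l\<in>{d. d dvd n div m}. int (totient (l * m))) = int n"
      using a totient_divisor_sum[of n] by (simp flip: of_nat_sum)
    ultimately show "int (od_degree (dihedral n) x) = 2 * int n - 1"
      using degi a by simp
  qed
qed

end
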